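(* The RMMS is self-maximizing: for every finite item set $M$, every $n\ge1$, and every two normalized monotone valuations $v,v'$ on $M$, there exists a bundle $T\subseteq M$ such that $v'(T)\ge \mathrm{RMMS}(M,v',n)$ and $v(T)\le \mathrm{RMMS}(M,v,n)$.
   Context: A valuation is a function $v:2^M\to\mathbb{R}$ that is normalized ($v(\emptyset)=0$) and monotone ($v(S)\le v(T)$ whenever $S\subseteq T$). Residual maximin share: $\mathrm{RMMS}(M,v,n)$ is the largest real $t$ with the following property: for every $0\le k<n$ and every $k$ pairwise disjoint bundles $B_1,\dots,B_k\subseteq M$ with $v(B_j)<t$ for all $j$, the set $M\setminus(B_1\cup\dots\cup B_k)$ can be partitioned into $n-k$ bundles each of value (under $v$) at least $t$. *)

theory Defs
  imports Complex_Main
begin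

definition valuation :: "'a set \<Rightarrow> ('a set \<Rightarrow> real) \<Rightarrow> bool" where
  "valuation M v \<longleftrightarrow> v {} = 0 \<and> (\<forall>S T. S \<subseteq> T \<and> T \<subseteq> M \<longrightarrow> v S \<le> v T)"

definition partitions_into :: "'a set \<Rightarrow> nat \<Rightarrow> (nat \<Rightarrow> 'a set) \<Rightarrow> bool" where
  "partitions_into S m P \<longleftrightarrow>
     (\<forall>i<m. \<forall>j<m. i \<noteq> j \<longrightarrow> P i \<inter> P j = {}) \<and> (\<Union>i<m. P i) = S"

definition rmms_property :: "'a set \<Rightarrow> ('a set \<Rightarrow> real) \<Rightarrow> nat \<Rightarrow> real \<Rightarrow> bool" where
  "rmms_property M v n t \<longleftrightarrow>
     (\<forall>k<n. \<forall>B :: nat \<Rightarrow> 'a set.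
        (\<forall>j<k. B j \<subseteq> M) \<and> (\<forall>i<k. \<forall>j<k. i \<noteq> j \<longrightarrow> B i \<inter> B j = {}) \<and>
        (\<forall>j<k. v (B j) < t)
        \<longrightarrow> (\<exists>P. partitions_into (M - (\<Union>j<k. B j)) (n - k) P \<and>
                 (\<forall>i<n - k. v (P i) \<ge> t)))"

definition RMMS :: "'a set \<Rightarrow> ('a set \<Rightarrow> real) \<Rightarrow> nat \<Rightarrow> real" where
  "RMMS M v n = (GREATEST t. rmms_property M v n t)"

end

theory Submission
  imports Defs
begin

lemma val_nonneg: "valuation M v \<Longrightarrow> S \<subseteq> M \<Longrightarrow> v S \<ge> 0"
  unfolding valuation_def by (metis empty_subsetI)

lemma val_mono: "valuation M v \<Longrightarrow> S \<subseteq> T \<Longrightarrow> T \<subseteq> M \<Longrightarrow> v S \<le> v T"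
  unfolding valuation_def by blast

lemma part_sub: "partitions_into S m P \<Longrightarrow> i < m \<Longrightarrow> P i \<subseteq> S"
  unfolding partitions_into_def by blast

lemma prop_k0:
  assumes "rmms_property M v n t" "n \<ge> 1"
  shows "\<exists>P. partitions_into M n P \<and> (\<forall>i<n. v (P i) \<ge> t)"
proof -
  have "0 < n" using assms(2) by simp
  from assms(1)[unfolded rmms_property_def, rule_format, OF this, of "\<lambda>_. {}"]
  show ?thesis by simp
qed

lemma prop_zero:
  assumes "valuation M v" "n \<ge> 1"
  shows "rmms_property M v n 0"
  unfolding rmms_property_def
proof (intro allI impI)
  fix k B assume k: "k < n" and h: "(\<forall>j<k. B j \<subseteq> M) \<and> (\<forall>i<k. \<forall>j<k. i \<noteq> j \<longrightarrow> B i \<inter> B j = {}) \<and> (\<forall>j<k. v (B j) < 0)"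
  have k0: "k = 0"
  proof (rule ccontr)
    assume "k \<noteq> 0"
    then have "B 0 \<subseteq> M" "v (B 0) < 0" using h by auto
    with val_nonneg[OF assms(1)] show False by (meson not_less)
  qed
  define P where "P = (\<lambda>i::nat. if i = 0 then M else {})"
  have U: "(\<Union>i<n. P i) = M"
  proof
    show "(\<Union>i<n. P i) \<subseteq> M" unfolding P_def by auto
    have "P 0 = M" "0 < n" using assms(2) unfolding P_def by auto
    then show "M \<subseteq> (\<Union>i<n. P i)" by blast
  qed
  have D: "\<forall>i<n. \<forall>j<n. i \<noteq> j \<longrightarrow> P i \<inter> P j = {}"
    unfolding P_def by simp
  have "partitions_into (M - (\<Union>j<k. B j)) (n - k) P"
    unfolding partitions_into_def using U D k0 by simp
  moreover have "\<forall>i<n - k. v (P i) \<ge> 0"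
    unfolding P_def using val_nonneg[OF assms(1)] by auto
  ultimately show "\<exists>P. partitions_into (M - (\<Union>j<k. B j)) (n - k) P \<and> (\<forall>i<n - k. v (P i) \<ge> 0)"
    by blast
qed

lemma lift:
  assumes fin: "finite M" and val: "valuation M v" and n: "n \<ge> 1" and pt: "rmms_property M v n t"
  shows "\<exists>x \<in> v ` Pow M. x \<ge> t \<and> rmms_property M v n x"
proof -
  obtain P where P: "partitions_into M n P" "\<forall>i<n. v (P i) \<ge> t" using prop_k0[OF pt n] by auto
  have "P 0 \<subseteq> M" using part_sub[OF P(1)] n by auto
  define S where "S = {x \<in> v ` Pow M. x \<ge> t}"
  have Sfin: "finite S" unfolding S_def using fin by auto
  have Sne: "v (P 0) \<in> S" unfolding S_def using \<open>P 0 \<subseteq> M\<close> P(2) n by auto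
  define t0 where "t0 = Min S"
  have t0S: "t0 \<in> S" unfolding t0_def using Sfin Sne Min_in by blast
  have t0min: "\<And>x. x \<in> S \<Longrightarrow> t0 \<le> x" unfolding t0_def using Sfin by auto
  have "rmms_property M v n t0"
    unfolding rmms_property_def
  proof (intro allI impI)
    fix k B assume k: "k < n" and h: "(\<forall>j<k. B j \<subseteq> M) \<and> (\<forall>i<k. \<forall>j<k. i \<noteq> j \<longrightarrow> B i \<inter> B j = {}) \<and> (\<forall>j<k. v (B j) < t0)"
    have "\<forall>j<k. v (B j) < t"
    proof (intro allI impI)
      fix j assume j: "j < k"
      show "v (B j) < t"
      proof (rule ccontr)
        assume "\<not> v (B j) < t"
        then have "v (B j) \<in> S" unfolding S_def using h j by auto
        then have "t0 \<le> v (B j)" by (rule t0min)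
        with h j show False by auto
      qed
    qed
    note bt = this
    have "\<exists>Q. partitions_into (M - (\<Union>j<k. B j)) (n - k) Q \<and> (\<forall>i<n - k. v (Q i) \<ge> t)"
      by (rule pt[unfolded rmms_property_def, rule_format, OF k]) (use h bt in blast)
    then obtain Q where Q: "partitions_into (M - (\<Union>j<k. B j)) (n - k) Q" "\<forall>i<n - k. v (Q i) \<ge> t"
      by blast
    have "\<forall>i<n - k. v (Q i) \<ge> t0"
    proof (intro allI impI)
      fix i assume i: "i < n - k"
      have "Q i \<subseteq> M" using part_sub[OF Q(1) i] by auto
      then have "v (Q i) \<in> S" unfolding S_def using Q(2) i by auto
      then show "v (Q i) \<ge> t0" by (rule t0min)
    qed
    with Q(1) show "\<exists>P. partitions_into (M - (\<Union>j<k. B j)) (n - k) P \<and> (\<forall>i<n - k. v (P i) \<ge> t0)" by blast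
  qed
  moreover have "t0 \<in> v ` Pow M" "t0 \<ge> t" using t0S unfolding S_def by auto
  ultimately show ?thesis by blast
qed

lemma greatest:
  assumes fin: "finite M" and val: "valuation M v" and n: "n \<ge> 1"
  shows "rmms_property M v n (RMMS M v n) \<and> (\<forall>t. rmms_property M v n t \<longrightarrow> t \<le> RMMS M v n)"
proof -
  define G where "G = {x \<in> v ` Pow M. rmms_property M v n x}"
  have Gfin: "finite G" unfolding G_def using fin by auto
  have "0 \<in> G" unfolding G_def using prop_zero[OF val n] val unfolding valuation_def
    by (metis (mono_tags, lifting) Pow_bottom image_eqI mem_Collect_eq)
  define g where "g = Max G"
  have gG: "g \<in> G" unfolding g_def using Gfin \<open>0 \<in> G\<close> Max_in by blast
  have gmax: "\<And>t. rmms_property M v n t \<Longrightarrow> t \<le> g"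
  proof -
    fix t assume "rmms_property M v n t"
    from lift[OF fin val n this] obtain x where "x \<in> G" "x \<ge> t" unfolding G_def by auto
    then show "t \<le> g" unfolding g_def using Gfin by (meson Max_ge order_trans)
  qed
  have "RMMS M v n = g" unfolding RMMS_def
    by (rule Greatest_equality) (use gG gmax G_def in auto)
  then show ?thesis using gG gmax G_def by auto
qed

theorem proposition3:
  fixes M :: "'a set" and v v' :: "'a set \<Rightarrow> real" and n :: nat
  assumes "finite M" and "n \<ge> 1"
    and "valuation M v" and "valuation M v'"
  shows "\<exists>T \<subseteq> M. v' T \<ge> RMMS M v' n \<and> v T \<le> RMMS M v n"
proof (rule ccontr)
  assume no: "\<not> ?thesis"
  define r where "r = RMMS M v n"
  define r' where "r' = RMMS M v' n"
  have g: "rmms_property M v n r" "\<And>t. rmms_property M v n t \<Longrightarrow> t \<le> r"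
    using greatest[OF assms(1,3,2)] r_def by auto
  have g': "rmms_property M v' n r'" using greatest[OF assms(1,4,2)] r'_def by auto
  have no': "\<And>T. T \<subseteq> M \<Longrightarrow> v' T \<ge> r' \<Longrightarrow> v T > r"
    using no r_def r'_def by force
  define S where "S = v ` {T. T \<subseteq> M \<and> v' T \<ge> r'}"
  have Sfin: "finite S" unfolding S_def using assms(1) by simp
  obtain P where P: "partitions_into M n P" "\<forall>i<n. v' (P i) \<ge> r'" using prop_k0[OF g' assms(2)] by auto
  have "P 0 \<subseteq> M" using part_sub[OF P(1)] assms(2) by auto
  then have Sne: "v (P 0) \<in> S" unfolding S_def using P(2) assms(2) by auto
  define m where "m = Min S"
  have mS: "m \<in> S" unfolding m_def using Sfin Sne Min_in by blast
  have mmin: "\<And>x. x \<in> S \<Longrightarrow> m \<le> x" unfolding m_def using Sfin by auto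
  have mr: "m > r" using mS no' unfolding S_def by auto
  have "rmms_property M v n m"
    unfolding rmms_property_def
  proof (intro allI impI)
    fix k B assume k: "k < n" and h: "(\<forall>j<k. B j \<subseteq> M) \<and> (\<forall>i<k. \<forall>j<k. i \<noteq> j \<longrightarrow> B i \<inter> B j = {}) \<and> (\<forall>j<k. v (B j) < m)"
    have "\<forall>j<k. v' (B j) < r'"
    proof (intro allI impI)
      fix j assume j: "j < k"
      show "v' (B j) < r'"
      proof (rule ccontr)
        assume "\<not> v' (B j) < r'"
        then have "v (B j) \<in> S" unfolding S_def using h j by auto
        then have "m \<le> v (B j)" by (rule mmin)
        with h j show False by auto
      qed
    qed
    note bt = this
    have "\<exists>Q. partitions_into (M - (\<Union>j<k. B j)) (n - k) Q \<and> (\<forall>i<n - k. v' (Q i) \<ge> r')"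
      by (rule g'[unfolded rmms_property_def, rule_format, OF k]) (use h bt in blast)
    then obtain Q where Q: "partitions_into (M - (\<Union>j<k. B j)) (n - k) Q" "\<forall>i<n - k. v' (Q i) \<ge> r'"
      by blast
    have "\<forall>i<n - k. v (Q i) \<ge> m"
    proof (intro allI impI)
      fix i assume i: "i < n - k"
      have "Q i \<subseteq> M" using part_sub[OF Q(1) i] by auto
      then have "v (Q i) \<in> S" unfolding S_def using Q(2) i by auto
      then show "v (Q i) \<ge> m" by (rule mmin)
    qed
    with Q(1) show "\<exists>P. partitions_into (M - (\<Union>j<k. B j)) (n - k) P \<and> (\<forall>i<n - k. v (P i) \<ge> m)" by blast
  qed
  then have "m \<le> r" by (rule g(2))
  with mr show False by simp
qed

end
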